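(* Let $G$ and $H$ be finitely generated groups, let $f:G\to H$ be a surjective homomorphism, and let $S=(g_1,\dots,g_n)\in\Gamma_n(G)$. Then: (1) if $\Gamma_n(H,f(S))$ has exponential growth, where $f(S)=(f(g_1),\dots,f(g_n))$, then $\Gamma_n(G,S)$ has exponential growth; (2) if some connected component of $\Gamma_m(H)$ has exponential growth, then $\Gamma_{n+m}(G,S)$ has exponential growth; (3) if $H$ has exponential Nielsen growth, then $G$ has exponential Nielsen growth.
   Context: For a group $G$, a generating $n$-tuple is $(g_1,\dots,g_n)\in G^n$ with $G=\langle g_1,\dots,g_n\rangle$. The product replacement graph $\Gamma_n(G)$ has vertices the generating $n$-tuples, with edges from $(g_1,\dots,g_n)$ to each tuple obtained by replacing $g_j$ by $g_jg_i^{\pm1}$ or $g_i^{\pm1}g_j$, for every ordered pair $i\neq j$. For $S=(g_1,\dots,g_n)\in\Gamma_n(G)$ and $m\ge0$, $S^{(m)}=(g_1,\dots,g_n,1,\dots,1)\in\Gamma_{n+m}(G)$ and $\Gamma_{n+m}(G,S)$ is the connected component of $\Gamma_{n+m}(G)$ containing $S^{(m)}$ (so $\Gamma_n(G,S)$ is the component containing $S$). For a graph $\Gamma$ and vertex $v$, $B_\Gamma(v,r)$ is the set of vertices at path distance at most $r$ from $v$; a graph has exponential growth from $v$ if $|B_\Gamma(v,r)|\ge\alpha^r$ for some $\alpha>1$ and all sufficiently large $r$; a connected graph has exponential growth if it has exponential growth from some (equivalently every) vertex. $G$ has exponential Nielsen growth if $\Gamma_n(G,S)$ has exponential growth for some $n$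 and some generating $n$-tuple $S$. *)

theory Defs
  imports "HOL-Algebra.Algebra"
begin

definition gen_tuple :: "('a, 'c) monoid_scheme \<Rightarrow> nat \<Rightarrow> 'a list \<Rightarrow> bool" where
  "gen_tuple G n S \<longleftrightarrow> length S = n \<and> set S \<subseteq> carrier G \<and> generate G (set S) = carrier G"

definition fin_gen :: "('a, 'c) monoid_scheme \<Rightarrow> bool" where
  "fin_gen G \<longleftrightarrow> (\<exists>A. finite A \<and> A \<subseteq> carrier G \<and> generate G A = carrier G)"

definition nielsen_move :: "('a, 'c) monoid_scheme \<Rightarrow> 'a list \<Rightarrow> 'a list \<Rightarrow> bool" where
  "nielsen_move G S T \<longleftrightarrow> (\<exists>i j. i < length S \<and> j < length S \<and> i \<noteq> j \<and>
     (T = S[j := S!j \<otimes>\<^bsub>G\<^esub> S!i] \<or> T = S[j := S!j \<otimes>\<^bsub>G\<^esub> inv\<^bsub>G\<^esub> (S!i)] \<or>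
      T = S[j := S!i \<otimes>\<^bsub>G\<^esub> S!j] \<or> T = S[j := inv\<^bsub>G\<^esub> (S!i) \<otimes>\<^bsub>G\<^esub> S!j]))"

definition pr_edge :: "('a, 'c) monoid_scheme \<Rightarrow> nat \<Rightarrow> 'a list \<Rightarrow> 'a list \<Rightarrow> bool" where
  "pr_edge G n S T \<longleftrightarrow> gen_tuple G n S \<and> gen_tuple G n T \<and> nielsen_move G S T"

definition pr_ball :: "('a, 'c) monoid_scheme \<Rightarrow> nat \<Rightarrow> 'a list \<Rightarrow> nat \<Rightarrow> 'a list set" where
  "pr_ball G n v r = {w. gen_tuple G n w \<and> (\<exists>k\<le>r. (pr_edge G n ^^ k) v w)}"

definition pr_component :: "('a, 'c) monoid_scheme \<Rightarrow> nat \<Rightarrow> 'a list \<Rightarrow> 'a list set" where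
  "pr_component G n v = {w. gen_tuple G n w \<and> (pr_edge G n)\<^sup>*\<^sup>* v w}"

definition exp_growth_from :: "('a, 'c) monoid_scheme \<Rightarrow> nat \<Rightarrow> 'a list \<Rightarrow> bool" where
  "exp_growth_from G n v \<longleftrightarrow>
     (\<exists>\<alpha>::real. \<alpha> > 1 \<and> (\<forall>\<^sub>F r in sequentially. \<alpha> ^ r \<le> real (card (pr_ball G n v r))))"

definition comp_exp_growth :: "('a, 'c) monoid_scheme \<Rightarrow> nat \<Rightarrow> 'a list \<Rightarrow> bool" where
  "comp_exp_growth G n S \<longleftrightarrow> (\<exists>v\<in>pr_component G n S. exp_growth_from G n v)"

definition pad :: "('a, 'c) monoid_scheme \<Rightarrow> 'a list \<Rightarrow> nat \<Rightarrow> 'a list" where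
  "pad G S m = S @ replicate m \<one>\<^bsub>G\<^esub>"

definition exp_nielsen_growth :: "('a, 'c) monoid_scheme \<Rightarrow> bool" where
  "exp_nielsen_growth G \<longleftrightarrow> (\<exists>n S. gen_tuple G n S \<and> comp_exp_growth G n S)"

end

theory Submission
  imports Defs
begin


lemma (in group) move_gen:
  assumes xc: "set x \<subseteq> carrier G" and mv: "nielsen_move G x x'"
  shows "set x' \<subseteq> carrier G \<and> generate G (set x') = generate G (set x)"
proof -
  obtain i j where ij: "i < length x" "j < length x" "i \<noteq> j" and
    cs: "x' = x[j := x!j \<otimes> x!i] \<or> x' = x[j := x!j \<otimes> inv (x!i)] \<or>
      x' = x[j := x!i \<otimes> x!j] \<or> x' = x[j := inv (x!i) \<otimes> x!j]"
    using mv unfolding nielsen_move_def by blast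
  define a where "a = x!i"
  define b where "b = x!j"
  have a: "a \<in> carrier G" "a \<in> set x" using ij xc a_def by auto
  have b: "b \<in> carrier G" "b \<in> set x" using ij xc b_def by auto
  have ag: "a \<in> generate G (set x)" using a generate.incl by metis
  have bg0: "b \<in> generate G (set x)" using b generate.incl by metis
  have aig: "inv a \<in> generate G (set x)" using a generate.inv by metis
  obtain c where x': "x' = x[j := c]" and c: "c \<in> carrier G" and cg: "c \<in> generate G (set x)"
    and bgen: "\<And>A. a \<in> A \<Longrightarrow> c \<in> A \<Longrightarrow> b \<in> generate G A"
  proof -
    from cs show ?thesis
    proof (elim disjE)
      assume h: "x' = x[j := x!j \<otimes> x!i]"
      have e: "b = (b \<otimes> a) \<otimes> inv a" using a b by (simp add: m_assoc)
      show ?thesis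
      proof (rule that[of "b \<otimes> a"])
        show "x' = x[j := b \<otimes> a]" using h a_def b_def by simp
        show "b \<otimes> a \<in> carrier G" using a b by simp
        show "b \<otimes> a \<in> generate G (set x)" using bg0 ag by (rule generate.eng)
        fix A assume hA: "a \<in> A" "b \<otimes> a \<in> A"
        have "(b \<otimes> a) \<otimes> inv a \<in> generate G A" by (rule generate.eng[OF generate.incl generate.inv]) (use hA in auto)
        then show "b \<in> generate G A" using e by simp
      qed
    next
      assume h: "x' = x[j := x!j \<otimes> inv (x!i)]"
      have e: "b = (b \<otimes> inv a) \<otimes> a" using a b by (simp add: m_assoc)
      show ?thesis
      proof (rule that[of "b \<otimes> inv a"])
        show "x' = x[j := b \<otimes> inv a]" using h a_def b_def by simp
        show "b \<otimes> inv a \<in> carrier G" using a b by simp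
        show "b \<otimes> inv a \<in> generate G (set x)" using bg0 aig by (rule generate.eng)
        fix A assume hA: "a \<in> A" "b \<otimes> inv a \<in> A"
        have "(b \<otimes> inv a) \<otimes> a \<in> generate G A" by (rule generate.eng[OF generate.incl generate.incl]) (use hA in auto)
        then show "b \<in> generate G A" using e by simp
      qed
    next
      assume h: "x' = x[j := x!i \<otimes> x!j]"
      have e: "b = inv a \<otimes> (a \<otimes> b)" using a b by (simp add: m_assoc[symmetric])
      show ?thesis
      proof (rule that[of "a \<otimes> b"])
        show "x' = x[j := a \<otimes> b]" using h a_def b_def by simp
        show "a \<otimes> b \<in> carrier G" using a b by simp
        show "a \<otimes> b \<in> generate G (set x)" using ag bg0 by (rule generate.eng)
        fix A assume hA: "a \<in> A" "a \<otimes> b \<in> A"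
        have "inv a \<otimes> (a \<otimes> b) \<in> generate G A" by (rule generate.eng[OF generate.inv generate.incl]) (use hA in auto)
        then show "b \<in> generate G A" using e by simp
      qed
    next
      assume h: "x' = x[j := inv (x!i) \<otimes> x!j]"
      have e: "b = a \<otimes> (inv a \<otimes> b)" using a b by (simp add: m_assoc[symmetric])
      show ?thesis
      proof (rule that[of "inv a \<otimes> b"])
        show "x' = x[j := inv a \<otimes> b]" using h a_def b_def by simp
        show "inv a \<otimes> b \<in> carrier G" using a b by simp
        show "inv a \<otimes> b \<in> generate G (set x)" using aig bg0 by (rule generate.eng)
        fix A assume hA: "a \<in> A" "inv a \<otimes> b \<in> A"
        have "a \<otimes> (inv a \<otimes> b) \<in> generate G A" by (rule generate.eng[OF generate.incl generate.incl]) (use hA in auto)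
        then show "b \<in> generate G A" using e by simp
      qed
    qed
  qed
  have cin: "c \<in> set x'" using ij x' by (metis length_list_update nth_list_update_eq nth_mem)
  have ain: "a \<in> set x'" using ij x' a_def by (metis length_list_update nth_list_update_neq nth_mem)
  have bg: "b \<in> generate G (set x')" using bgen[OF ain cin] .
  have sx': "set x' \<subseteq> insert c (set x)" using x' by (simp add: set_update_subset_insert)
  have sx: "set x \<subseteq> insert b (set x')"
  proof -
    have "x = x'[j := b]" using x' b_def by simp
    then show ?thesis by (simp add: set_update_subset_insert)
  qed
  have x'c: "set x' \<subseteq> carrier G" using sx' c xc by auto
  have "generate G (set x') \<subseteq> generate G (set x)"
    apply (rule generate_subgroup_incl)
    using sx' cg generate.incl[of _ "set x" G] apply auto[1]
    by (rule generate_is_subgroup[OF xc])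
  moreover have "generate G (set x) \<subseteq> generate G (set x')"
    apply (rule generate_subgroup_incl)
    using sx bg generate.incl[of _ "set x'" G] apply auto[1]
    by (rule generate_is_subgroup[OF x'c])
  ultimately show ?thesis using x'c by blast
qed



lemma (in group_hom) lift_move:
  assumes xc: "set x \<subseteq> carrier G" and mv: "nielsen_move H (map h (drop n x)) y"
  shows "\<exists>x'. nielsen_move G x x' \<and> map h (drop n x') = y \<and> take n x' = take n x"
proof -
  obtain i j where ij: "i < length x - n" "j < length x - n" "i \<noteq> j" and
    cs: "y = (map h (drop n x))[j := (map h (drop n x))!j \<otimes>\<^bsub>H\<^esub> (map h (drop n x))!i] \<or>
         y = (map h (drop n x))[j := (map h (drop n x))!j \<otimes>\<^bsub>H\<^esub> inv\<^bsub>H\<^esub> ((map h (drop n x))!i)] \<or>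
         y = (map h (drop n x))[j := (map h (drop n x))!i \<otimes>\<^bsub>H\<^esub> (map h (drop n x))!j] \<or>
         y = (map h (drop n x))[j := inv\<^bsub>H\<^esub> ((map h (drop n x))!i) \<otimes>\<^bsub>H\<^esub> (map h (drop n x))!j]"
    using mv unfolding nielsen_move_def by auto
  define a where "a = x!(n+i)"
  define b where "b = x!(n+j)"
  have a: "a \<in> carrier G" using ij xc a_def by auto
  have b: "b \<in> carrier G" using ij xc b_def by auto
  have ai: "(map h (drop n x))!i = h a" using ij a_def by simp
  have bj: "(map h (drop n x))!j = h b" using ij b_def by simp
  have key: "\<And>c. map h (drop n (x[n+j := c])) = (map h (drop n x))[j := h c]
     \<and> take n (x[n+j := c]) = take n x"
    by (simp add: drop_update_swap map_update)
  have mvs: "\<And>c. c = b \<otimes> a \<or> c = b \<otimes> inv a \<or> c = a \<otimes> b \<or> c = inv a \<otimes> b \<Longrightarrow> nielsen_move G x (x[n+j := c])"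
    unfolding nielsen_move_def a_def b_def
    apply (rule exI[of _ "n+i"], rule exI[of _ "n+j"]) using ij by auto
  from cs show ?thesis
  proof (elim disjE)
    assume "y = (map h (drop n x))[j := (map h (drop n x))!j \<otimes>\<^bsub>H\<^esub> (map h (drop n x))!i]"
    then show ?thesis using key[of "b \<otimes> a"] mvs[of "b \<otimes> a"] ai bj a b by auto
  next
    assume "y = (map h (drop n x))[j := (map h (drop n x))!j \<otimes>\<^bsub>H\<^esub> inv\<^bsub>H\<^esub> ((map h (drop n x))!i)]"
    then show ?thesis using key[of "b \<otimes> inv a"] mvs[of "b \<otimes> inv a"] ai bj a b by auto
  next
    assume "y = (map h (drop n x))[j := (map h (drop n x))!i \<otimes>\<^bsub>H\<^esub> (map h (drop n x))!j]"
    then show ?thesis using key[of "a \<otimes> b"] mvs[of "a \<otimes> b"] ai bj a b by auto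
  next
    assume "y = (map h (drop n x))[j := inv\<^bsub>H\<^esub> ((map h (drop n x))!i) \<otimes>\<^bsub>H\<^esub> (map h (drop n x))!j]"
    then show ?thesis using key[of "inv a \<otimes> b"] mvs[of "inv a \<otimes> b"] ai bj a b by auto
  qed
qed

lemma finite_nbrs: "finite {T. nielsen_move G S T}"
proof -
  let ?l = "length S"
  have "{T. nielsen_move G S T} \<subseteq> (\<Union>i<?l. \<Union>j<?l.
     {S[j := S!j \<otimes>\<^bsub>G\<^esub> S!i], S[j := S!j \<otimes>\<^bsub>G\<^esub> inv\<^bsub>G\<^esub> (S!i)],
      S[j := S!i \<otimes>\<^bsub>G\<^esub> S!j], S[j := inv\<^bsub>G\<^esub> (S!i) \<otimes>\<^bsub>G\<^esub> S!j]})"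
    unfolding nielsen_move_def by blast
  then show ?thesis by (rule finite_subset) auto
qed

lemma finite_ball: "finite (pr_ball G N v r)"
proof -
  have fk: "finite {w. (pr_edge G N ^^ k) v w}" for k
  proof (induction k)
    case 0 then show ?case by simp
  next
    case (Suc k)
    have "{w. (pr_edge G N ^^ Suc k) v w} \<subseteq> (\<Union>u\<in>{w. (pr_edge G N ^^ k) v w}. {T. nielsen_move G u T})"
      by (auto simp: pr_edge_def)
    then show ?case using Suc finite_nbrs by (meson finite_UN_I finite_subset mem_Collect_eq)
  qed
  have "pr_ball G N v r \<subseteq> (\<Union>k\<in>{..r}. {w. (pr_edge G N ^^ k) v w})"
    unfolding pr_ball_def by auto
  then show ?thesis using fk by (meson finite_UN_I finite_atMost finite_subset)
qed

lemma lift_paths: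
  assumes x0: "x0 \<in> R"
    and lift: "\<And>x y. x \<in> R \<Longrightarrow> pr_edge H M (\<phi> x) y \<Longrightarrow> \<exists>x'\<in>R. pr_edge G N x x' \<and> \<phi> x' = y"
  shows "(pr_edge H M ^^ k) (\<phi> x0) y \<Longrightarrow> \<exists>x\<in>R. (pr_edge G N ^^ k) x0 x \<and> \<phi> x = y"
proof (induction k arbitrary: y)
  case 0 then show ?case using x0 by auto
next
  case (Suc k)
  then obtain z where z: "(pr_edge H M ^^ k) (\<phi> x0) z" "pr_edge H M z y" by auto
  then obtain x where x: "x \<in> R" "(pr_edge G N ^^ k) x0 x" "\<phi> x = z" using Suc.IH by blast
  then obtain x' where "x' \<in> R" "pr_edge G N x x'" "\<phi> x' = y" using lift z(2) by blast
  then show ?case using x by auto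
qed

lemma comp_lift:
  assumes x0: "x0 \<in> R" and RG: "\<And>x. x \<in> R \<Longrightarrow> gen_tuple G N x"
    and lift: "\<And>x y. x \<in> R \<Longrightarrow> pr_edge H M (\<phi> x) y \<Longrightarrow> \<exists>x'\<in>R. pr_edge G N x x' \<and> \<phi> x' = y"
    and ce: "comp_exp_growth H M (\<phi> x0)"
  shows "comp_exp_growth G N x0"
proof -
  obtain v where v: "v \<in> pr_component H M (\<phi> x0)" "exp_growth_from H M v"
    using ce unfolding comp_exp_growth_def by blast
  then obtain k where "(pr_edge H M ^^ k) (\<phi> x0) v"
    unfolding pr_component_def by (auto simp: rtranclp_power)
  then obtain x1 where x1: "x1 \<in> R" "(pr_edge G N ^^ k) x0 x1" "\<phi> x1 = v"
    using lift_paths[OF x0 lift] by blast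
  have x1c: "x1 \<in> pr_component G N x0"
    unfolding pr_component_def using x1 RG by (auto simp: rtranclp_power)
  have ball: "card (pr_ball H M v r) \<le> card (pr_ball G N x1 r)" for r
  proof -
    have "pr_ball H M v r \<subseteq> \<phi> ` pr_ball G N x1 r"
    proof
      fix w assume "w \<in> pr_ball H M v r"
      then obtain k where k: "k \<le> r" "(pr_edge H M ^^ k) (\<phi> x1) w"
        unfolding pr_ball_def using x1 by auto
      then obtain x where "x \<in> R" "(pr_edge G N ^^ k) x1 x" "\<phi> x = w"
        using lift_paths[OF x1(1) lift] by blast
      then show "w \<in> \<phi> ` pr_ball G N x1 r" unfolding pr_ball_def using k RG by blast
    qed
    then have "card (pr_ball H M v r) \<le> card (\<phi> ` pr_ball G N x1 r)"
      by (intro card_mono finite_imageI finite_ball)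
    also have "\<dots> \<le> card (pr_ball G N x1 r)" by (intro card_image_le finite_ball)
    finally show ?thesis .
  qed
  obtain \<alpha> :: real where "\<alpha> > 1" "\<forall>\<^sub>F r in sequentially. \<alpha> ^ r \<le> real (card (pr_ball H M v r))"
    using v unfolding exp_growth_from_def by blast
  then have "exp_growth_from G N x1"
    unfolding exp_growth_from_def
    by (auto intro!: exI[of _ \<alpha>] elim!: eventually_mono intro: order_trans[OF _ of_nat_mono[OF ball]])
  then show ?thesis using x1c unfolding comp_exp_growth_def by blast
qed



lemma nielsen_move_length: "nielsen_move G x x' \<Longrightarrow> length x' = length x"
  unfolding nielsen_move_def by auto

lemma upd_carrier: "set x \<subseteq> A \<Longrightarrow> c \<in> A \<Longrightarrow> set (x[p := c]) \<subseteq> A"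
  by (meson insert_subset order_trans set_update_subset_insert)

lemma (in group) Rgen:
  assumes "gen_tuple G n S" "length x = N" "take n x = S" "set x \<subseteq> carrier G"
  shows "gen_tuple G N x"
proof -
  have "set S \<subseteq> set x" using assms(3) by (metis set_take_subset)
  then have "carrier G \<subseteq> generate G (set x)" using assms(1) mono_generate unfolding gen_tuple_def by blast
  moreover have "generate G (set x) \<subseteq> carrier G" using generate_incl assms(4) by blast
  ultimately show ?thesis using assms unfolding gen_tuple_def by blast
qed

lemma (in group) slot:
  assumes S: "gen_tuple G n S"
  shows "g \<in> generate G (set S) \<Longrightarrow> length x = N \<Longrightarrow> take n x = S \<Longrightarrow> set x \<subseteq> carrier G
    \<Longrightarrow> n \<le> p \<Longrightarrow> p < N \<Longrightarrow> (pr_edge G N)\<^sup>*\<^sup>* x (x[p := x!p \<otimes> g])"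
proof (induction g arbitrary: x rule: generate.induct)
  case one
  have "x!p \<in> carrier G" using one by auto
  then show ?case using one by simp
next
  case (incl h)
  obtain i where i: "i < n" "h = x!i" using incl S unfolding gen_tuple_def
    by (metis in_set_conv_nth nth_take)
  have xp: "x!p \<in> carrier G" "x!i \<in> carrier G" using incl i by auto
  have "pr_edge G N x (x[p := x!p \<otimes> h])"
    unfolding pr_edge_def
  proof (intro conjI)
    show "gen_tuple G N x" using Rgen[OF S] incl by blast
    have "set (x[p := x ! p \<otimes> h]) \<subseteq> carrier G"
      by (rule upd_carrier) (use incl xp i in auto)
    then show "gen_tuple G N (x[p := x ! p \<otimes> h])" using Rgen[OF S, of "x[p := x ! p \<otimes> h]" N] incl by simp
    show "nielsen_move G x (x[p := x ! p \<otimes> h])" unfolding nielsen_move_def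
      using i incl by (intro exI[of _ i] exI[of _ p]) auto
  qed
  then show ?case by blast
next
  case (inv h)
  obtain i where i: "i < n" "h = x!i" using inv S unfolding gen_tuple_def
    by (metis in_set_conv_nth nth_take)
  have xp: "x!p \<in> carrier G" "x!i \<in> carrier G" using inv i by auto
  have "pr_edge G N x (x[p := x!p \<otimes> inv h])"
    unfolding pr_edge_def
  proof (intro conjI)
    show "gen_tuple G N x" using Rgen[OF S] inv by blast
    have "set (x[p := x ! p \<otimes> inv h]) \<subseteq> carrier G"
      by (rule upd_carrier) (use inv xp i in auto)
    then show "gen_tuple G N (x[p := x ! p \<otimes> inv h])" using Rgen[OF S, of "x[p := x ! p \<otimes> inv h]" N] inv by simp
    show "nielsen_move G x (x[p := x ! p \<otimes> inv h])" unfolding nielsen_move_def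
      using i inv by (intro exI[of _ i] exI[of _ p]) auto
  qed
  then show ?case by blast
next
  case (eng h1 h2)
  have Sc: "set S \<subseteq> carrier G" using S unfolding gen_tuple_def by blast
  have hc: "h1 \<in> carrier G" "h2 \<in> carrier G" using eng.hyps generate_in_carrier[OF Sc] by auto
  have xp: "x!p \<in> carrier G" using eng.prems by auto
  define x1 where "x1 = x[p := x!p \<otimes> h1]"
  have r1: "(pr_edge G N)\<^sup>*\<^sup>* x x1" unfolding x1_def by (rule eng.IH(1)) (use eng.prems in auto)
  have x1c: "length x1 = N" "take n x1 = S" "set x1 \<subseteq> carrier G"
  proof -
    show "length x1 = N" "take n x1 = S" unfolding x1_def using eng.prems by auto
    show "set x1 \<subseteq> carrier G" unfolding x1_def by (rule upd_carrier) (use eng.prems xp hc in auto)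
  qed
  have r2: "(pr_edge G N)\<^sup>*\<^sup>* x1 (x1[p := x1!p \<otimes> h2])" using eng.IH(2)[OF x1c] eng.prems by blast
  have "x1[p := x1!p \<otimes> h2] = x[p := x!p \<otimes> (h1 \<otimes> h2)]"
    unfolding x1_def using eng.prems xp hc by (simp add: m_assoc)
  then show ?case using rtranclp_trans[OF r1 r2] by (simp only:)
qed

lemma (in group) fill:
  assumes S: "gen_tuple G n S"
  shows "set U \<subseteq> carrier G \<Longrightarrow> set P \<subseteq> carrier G \<Longrightarrow>
    (pr_edge G (n + length P + length U))\<^sup>*\<^sup>* (S @ P @ replicate (length U) \<one>) (S @ P @ U)"
proof (induction U arbitrary: P)
  case Nil then show ?case by simp
next
  case (Cons u U)
  have Sc: "set S \<subseteq> carrier G" "length S = n" "generate G (set S) = carrier G"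
    using S unfolding gen_tuple_def by auto
  let ?x = "S @ P @ \<one> # replicate (length U) \<one>"
  have u: "u \<in> carrier G" using Cons.prems by auto
  have "(pr_edge G (n + length P + length (u # U)))\<^sup>*\<^sup>* ?x (?x[n + length P := ?x!(n + length P) \<otimes> u])"
    by (rule slot[OF S]) (use Sc u Cons.prems in auto)
  note r1 = this
  have eqN: "n + length (P @ [u]) + length U = n + length P + length (u # U)" by simp
  have e1: "?x[n + length P := ?x!(n + length P) \<otimes> u] = S @ (P @ [u]) @ replicate (length U) \<one>"
    using Sc u by (simp add: list_update_append nth_append)
  have r2: "(pr_edge G (n + length (P @ [u]) + length U))\<^sup>*\<^sup>* (S @ (P @ [u]) @ replicate (length U) \<one>) (S @ (P @ [u]) @ U)"
    by (rule Cons.IH) (use Cons.prems u in auto)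
  have "(pr_edge G (n + length P + length (u # U)))\<^sup>*\<^sup>* ?x (S @ (P @ [u]) @ U)"
    using rtranclp_trans[OF r1[unfolded e1] r2[unfolded eqN]] .
  moreover have "replicate (length (u # U)) \<one> = \<one> # replicate (length U) \<one>" by simp
  moreover have "S @ (P @ [u]) @ U = S @ P @ u # U" by simp
  ultimately show ?case by (simp only:)
qed

lemma comp_transfer:
  assumes "comp_exp_growth G N x" "(pr_edge G N)\<^sup>*\<^sup>* y x"
  shows "comp_exp_growth G N y"
  using assms unfolding comp_exp_growth_def pr_component_def
  by (auto intro: rtranclp_trans)

lemma part2:
  assumes G: "group G" and H: "group H" and hom: "f \<in> hom G H" and surj: "f ` carrier G = carrier H"
    and S: "gen_tuple G n S"
    and T: "gen_tuple H m T" "comp_exp_growth H m T"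
  shows "comp_exp_growth G (n + m) (pad G S m)"
proof -
  interpret group_hom G H f using G H hom by (simp add: group_hom_def group_hom_axioms_def)
  define T' where "T' = map (\<lambda>t. SOME g. g \<in> carrier G \<and> f g = t) T"
  have T'p: "map f T' = T" "set T' \<subseteq> carrier G" "length T' = m"
  proof -
    have "\<And>t. t \<in> set T \<Longrightarrow> (SOME g. g \<in> carrier G \<and> f g = t) \<in> carrier G \<and> f (SOME g. g \<in> carrier G \<and> f g = t) = t"
    proof (rule someI_ex)
      fix t assume "t \<in> set T"
      then have "t \<in> carrier H" using T unfolding gen_tuple_def by blast
      then have "t \<in> f ` carrier G" using surj by simp
      then show "\<exists>g. g \<in> carrier G \<and> f g = t" by (elim imageE) auto
    qed
    then have h: "\<And>t. t \<in> set T \<Longrightarrow> f (SOME g. g \<in> carrier G \<and> f g = t) = t"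
      "\<And>t. t \<in> set T \<Longrightarrow> (SOME g. g \<in> carrier G \<and> f g = t) \<in> carrier G" by blast+
    show "map f T' = T" unfolding T'_def by (simp add: h(1) map_idI)
    show "set T' \<subseteq> carrier G" unfolding T'_def using h(2) by auto
    show "length T' = m" unfolding T'_def using T(1) by (simp add: gen_tuple_def)
  qed
  have Sl: "length S = n" "set S \<subseteq> carrier G" using S unfolding gen_tuple_def by auto
  define R where "R = {x. length x = n + m \<and> take n x = S \<and> set x \<subseteq> carrier G}"
  have x0: "S @ T' \<in> R" unfolding R_def using Sl T'p by auto
  have "comp_exp_growth G (n + m) (S @ T')"
  proof (rule comp_lift[where R = R and \<phi> = "\<lambda>x. map f (drop n x)" and H = H and M = m])
    show "S @ T' \<in> R" by (rule x0)
    show "gen_tuple G (n + m) x" if "x \<in> R" for x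
      using G.Rgen[OF S, of x "n+m"] that unfolding R_def by simp
    show "comp_exp_growth H m (map f (drop n (S @ T')))" using T'p T Sl by simp
    fix x y assume x: "x \<in> R" and e: "pr_edge H m (map f (drop n x)) y"
    have xc: "set x \<subseteq> carrier G" using x R_def by auto
    obtain x' where x': "nielsen_move G x x'" "map f (drop n x') = y" "take n x' = take n x"
      using lift_move[OF xc] e unfolding pr_edge_def by blast
    have x'R: "x' \<in> R" using x x' G.move_gen[OF xc x'(1)] nielsen_move_length[OF x'(1)]
      unfolding R_def by auto
    have "pr_edge G (n + m) x x'"
      unfolding pr_edge_def using x x'R x'(1) G.Rgen[OF S, of x "n+m"] G.Rgen[OF S, of x' "n+m"] unfolding R_def by simp
    then show "\<exists>x'\<in>R. pr_edge G (n + m) x x' \<and> map f (drop n x') = y" using x'R x'(2) by blast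
  qed
  moreover have "(pr_edge G (n + m))\<^sup>*\<^sup>* (pad G S m) (S @ T')"
    using G.fill[OF S T'p(2), of "[]"] T'p unfolding pad_def by simp
  ultimately show ?thesis by (rule comp_transfer)
qed



theorem proposition3p5:
  fixes G :: "('a, 'c) monoid_scheme" and H :: "('b, 'd) monoid_scheme"
    and f :: "'a \<Rightarrow> 'b" and S :: "'a list" and n :: nat
  assumes "group G" and "group H" and "fin_gen G" and "fin_gen H"
    and "f \<in> hom G H" and "f ` carrier G = carrier H"
    and "gen_tuple G n S"
  shows "(comp_exp_growth H n (map f S) \<longrightarrow> comp_exp_growth G n S)
    \<and> (\<forall>m. (\<exists>T. gen_tuple H m T \<and> comp_exp_growth H m T) \<longrightarrow> comp_exp_growth G (n + m) (pad G S m))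
    \<and> (exp_nielsen_growth H \<longrightarrow> exp_nielsen_growth G)"
proof (intro conjI impI allI)
  interpret group_hom G H f using assms by (simp add: group_hom_def group_hom_axioms_def)
  assume ce: "comp_exp_growth H n (map f S)"
  show "comp_exp_growth G n S"
  proof (rule comp_lift[where R = "{x. gen_tuple G n x}" and \<phi> = "map f" and H = H and M = n])
    show "S \<in> {x. gen_tuple G n x}" using assms by simp
    show "gen_tuple G n x" if "x \<in> {x. gen_tuple G n x}" for x using that by simp
    show "comp_exp_growth H n (map f S)" by (rule ce)
    fix x y assume x: "x \<in> {x. gen_tuple G n x}" and e: "pr_edge H n (map f x) y"
    have xc: "set x \<subseteq> carrier G" using x by (simp add: gen_tuple_def)
    obtain x' where x': "nielsen_move G x x'" "map f (drop 0 x') = y"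
      using lift_move[OF xc, of 0 y] e unfolding pr_edge_def by auto
    have "gen_tuple G n x'" using x G.move_gen[OF xc x'(1)] nielsen_move_length[OF x'(1)]
      unfolding gen_tuple_def by auto
    then show "\<exists>x'\<in>{x. gen_tuple G n x}. pr_edge G n x x' \<and> map f x' = y"
      using x x' unfolding pr_edge_def by auto
  qed
next
  fix m assume "\<exists>T. gen_tuple H m T \<and> comp_exp_growth H m T"
  then show "comp_exp_growth G (n + m) (pad G S m)"
    using part2[OF assms(1,2,5,6,7)] by blast
next
  assume "exp_nielsen_growth H"
  then obtain m T where T: "gen_tuple H m T" "comp_exp_growth H m T"
    unfolding exp_nielsen_growth_def by blast
  obtain A where A: "finite A" "A \<subseteq> carrier G" "generate G A = carrier G"
    using assms(3) unfolding fin_gen_def by blast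
  obtain S0 where S0: "set S0 = A" using finite_list[OF A(1)] by blast
  have gS0: "gen_tuple G (length S0) S0" using A S0 unfolding gen_tuple_def by simp
  have c: "comp_exp_growth G (length S0 + m) (pad G S0 m)"
    by (rule part2[OF assms(1,2,5,6) gS0 T])
  have "gen_tuple G (length S0 + m) (pad G S0 m)"
    by (rule group.Rgen[OF assms(1) gS0]) (use A S0 group.subgroup_self[OF assms(1)] in \<open>auto simp: pad_def subgroup.one_closed\<close>)
  then show "exp_nielsen_growth G" using c unfolding exp_nielsen_growth_def by blast
qed


end
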